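(* In the two-block setting, suppose Assumptions 1 and 2 hold. Let $\{y^{k+1},s^{k+1},x^{k+1}\}_{k\ge0}$ be generated by Algorithm B from $y^0\in\operatorname{dom}f_1$, $x^0\in\mathbb{X}$, $\sigma>0$, and let $(y^*,s^*,x^* )$ be its limit. Then for all $k\ge0$, $$\|\mathcal{R}(y^{k+1},s^{k+1},x^{k+1})\|\le\frac{1}{k+1}\Big(\frac{\sigma\|B_2^*\|+1}{\sigma}\big(\|x^0-x^*\|+\sigma\|B_1y^0-B_1y^*\|\big)\Big),$$ $$h(y^{k+1},s^{k+1})\ge-\frac{1}{k+1}\Big(\frac{\|x^*\|}{\sigma}\big(\|x^0-x^*\|+\sigma\|B_1y^0-B_1y^*\|\big)\Big),$$ $$h(y^{k+1},s^{k+1})\le\frac{1}{k+1}\cdot\frac{\big(\|x^0-x^*\|+\sigma\|B_1y^0-B_1y^*\|\big)^2+\|x^*\|\big(\|x^0-x^*\|+\sigma\|B_1y^0-B_1y^*\|\big)}{\sigma}.$$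
   Context: Two-block setting: $\mathbb{X},\mathbb{Y},\mathbb{Z}$ are finite-dimensional real Euclidean spaces; $f_1:\mathbb{Y}\to(-\infty,+\infty]$, $f_2:\mathbb{Z}\to(-\infty,+\infty]$ proper closed convex; $B_1:\mathbb{Y}\to\mathbb{X}$, $B_2:\mathbb{Z}\to\mathbb{X}$ linear; $c\in\mathbb{X}$. Problem (P): $\min f_1(y)+f_2(s)$ s.t. $B_1y+B_2s=c$. Dual (D): $\max_x\{-f_1^*(-B_1^*x)-f_2^*(-B_2^*x)-\langle c,x\rangle\}$. $L_\sigma(y,s;x):=f_1(y)+f_2(s)+\langle x,B_1y+B_2s-c\rangle+\frac{\sigma}{2}\|B_1y+B_2s-c\|^2$. $\Sigma_{f_1}$ (resp. $\Sigma_{f_2}$) is a self-adjoint positive semidefinite operator with $f_1(y)\ge f_1(\hat y)+\langle\hat\phi,y-\hat y\rangle+\frac12\|y-\hat y\|^2_{\Sigma_{f_1}}$ and $\langle\phi-\hat\phi,y-\hat y\rangle\ge\|y-\hat y\|^2_{\Sigma_{f_1}}$ for all $y,\hat y\in\operatorname{dom}f_1$, $\phi\in\partial f_1(y)$, $\hat\phi\in\partial f_1(\hat y)$ (same for $f_2$). Assumption 1: for $i=1,2$, $\operatorname{ri}(\operatorname{dom}f_i^* )\cap\operatorname{Range}(B_i^* )\ne\emptyset$; $\operatorname{ri}(\operatorname{dom}(f_1^*\circ(-B_1^* )))\cap\operatorname{ri}(\operatorname{dom}(f_2^*\circ(-B_2^* )))\ne\emptyset$; (P) has a solution. Assumption 2: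 $\Sigma_{f_1}+B_1^*B_1$ and $\Sigma_{f_2}+B_2^*B_2$ are positive definite. Algorithm B: input $y^0,x^0,\sigma$; $\hat x^0:=x^0$; for $k\ge0$: $s^{k+1}=\arg\min_s L_\sigma(y^k,s;\hat x^k)$; $x^{k+1/2}=\hat x^k+\sigma(B_1y^k+B_2s^{k+1}-c)$; $y^{k+1}=\arg\min_y L_\sigma(y,s^{k+1};x^{k+1/2})$; $x^{k+1}=x^{k+1/2}+\sigma(B_1y^{k+1}+B_2s^{k+1}-c)$; $\hat x^{k+1}=\frac{1}{k+2}\hat x^0+\frac{k+1}{k+2}x^{k+1}+\frac{\sigma}{k+2}[(B_1y^0-c)-(B_1y^{k+1}-c)]$. The sequence converges to $(y^*,s^*,x^* )$ with $(y^*,s^* )$ solving (P), $x^*$ solving (D). KKT residual: $\mathcal{R}(y,s,x):=\big(y-\operatorname{Prox}_{f_1}(y-B_1^*x);\ s-\operatorname{Prox}_{f_2}(s-B_2^*x);\ c-B_1y-B_2s\big)$, where $\operatorname{Prox}_f(z):=\arg\min_u\{f(u)+\frac12\|u-z\|^2\}$. $h(y,s):=f_1(y)+f_2(s)-f_1(y^* )-f_2(s^* )$. $\|B_2^*\|$ is the operator (spectral) norm. *)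

theory Defs
  imports "HOL-Analysis.Analysis"
begin

text \<open>An extended-real-valued proper closed convex function f : E \<rightarrow> (-\<infinity>,+\<infinity>] is represented
  by its (real) values on its effective domain D = dom f (value +\<infinity> outside D).\<close>

definition proper_closed_convex :: "('a::euclidean_space \<Rightarrow> real) \<Rightarrow> 'a set \<Rightarrow> bool" where
  "proper_closed_convex f D \<longleftrightarrow> D \<noteq> {} \<and> convex D \<and> convex_on D f \<and>
     closed {(y, t). y \<in> D \<and> f y \<le> t}"

definition subdiff :: "('a::euclidean_space \<Rightarrow> real) \<Rightarrow> 'a set \<Rightarrow> 'a \<Rightarrow> 'a set" where
  "subdiff f D y = {\<phi>. y \<in> D \<and> (\<forall>u\<in>D. f u \<ge> f y + inner \<phi> (u - y))}"

definition conj :: "('a::euclidean_space \<Rightarrow> real) \<Rightarrow> 'a set \<Rightarrow> 'a \<Rightarrow> ereal" where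
  "conj f D u = (SUP y\<in>D. ereal (inner u y - f y))"

definition conj_dom :: "('a::euclidean_space \<Rightarrow> real) \<Rightarrow> 'a set \<Rightarrow> 'a set" where
  "conj_dom f D = {u. conj f D u < \<infinity>}"

definition sqnorm_op :: "('a::euclidean_space \<Rightarrow> 'a) \<Rightarrow> 'a \<Rightarrow> real" where
  "sqnorm_op S v = inner v (S v)"

definition self_adj_psd :: "('a::euclidean_space \<Rightarrow> 'a) \<Rightarrow> bool" where
  "self_adj_psd S \<longleftrightarrow> linear S \<and> adjoint S = S \<and> (\<forall>v. inner v (S v) \<ge> 0)"

definition pos_def_op :: "('a::euclidean_space \<Rightarrow> 'a) \<Rightarrow> bool" where
  "pos_def_op S \<longleftrightarrow> (\<forall>v. v \<noteq> 0 \<longrightarrow> inner v (S v) > 0)"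

definition strong_cvx_op :: "('a::euclidean_space \<Rightarrow> real) \<Rightarrow> 'a set \<Rightarrow> ('a \<Rightarrow> 'a) \<Rightarrow> bool" where
  "strong_cvx_op f D S \<longleftrightarrow> self_adj_psd S \<and>
     (\<forall>y\<in>D. \<forall>yh\<in>D. \<forall>\<phi>\<in>subdiff f D y. \<forall>\<phi>h\<in>subdiff f D yh.
        f y \<ge> f yh + inner \<phi>h (y - yh) + 1/2 * sqnorm_op S (y - yh) \<and>
        inner (\<phi> - \<phi>h) (y - yh) \<ge> sqnorm_op S (y - yh))"

definition prox :: "('a::euclidean_space \<Rightarrow> real) \<Rightarrow> 'a set \<Rightarrow> 'a \<Rightarrow> 'a" where
  "prox f D z = (THE u. u \<in> D \<and> (\<forall>v\<in>D. f u + 1/2 * (norm (u - z))\<^sup>2 \<le> f v + 1/2 * (norm (v - z))\<^sup>2))"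

text \<open>Augmented Lagrangian (finite part; only evaluated on dom f1 \<times> dom f2).\<close>
definition aug_lag ::
  "('y::euclidean_space \<Rightarrow> real) \<Rightarrow> ('z::euclidean_space \<Rightarrow> real) \<Rightarrow> ('y \<Rightarrow> 'x::euclidean_space)
   \<Rightarrow> ('z \<Rightarrow> 'x) \<Rightarrow> 'x \<Rightarrow> real \<Rightarrow> 'y \<Rightarrow> 'z \<Rightarrow> 'x \<Rightarrow> real" where
  "aug_lag f1 f2 B1 B2 c \<sigma> y s x =
     f1 y + f2 s + inner x (B1 y + B2 s - c) + \<sigma>/2 * (norm (B1 y + B2 s - c))\<^sup>2"

definition kkt_res_norm ::
  "('y::euclidean_space \<Rightarrow> real) \<Rightarrow> 'y set \<Rightarrow> ('z::euclidean_space \<Rightarrow> real) \<Rightarrow> 'z set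
   \<Rightarrow> ('y \<Rightarrow> 'x::euclidean_space) \<Rightarrow> ('z \<Rightarrow> 'x) \<Rightarrow> 'x \<Rightarrow> 'y \<Rightarrow> 'z \<Rightarrow> 'x \<Rightarrow> real" where
  "kkt_res_norm f1 D1 f2 D2 B1 B2 c y s x =
     sqrt ((norm (y - prox f1 D1 (y - adjoint B1 x)))\<^sup>2
         + (norm (s - prox f2 D2 (s - adjoint B2 x)))\<^sup>2
         + (norm (c - B1 y - B2 s))\<^sup>2)"

definition primal_sol ::
  "('y::euclidean_space \<Rightarrow> real) \<Rightarrow> 'y set \<Rightarrow> ('z::euclidean_space \<Rightarrow> real) \<Rightarrow> 'z set
   \<Rightarrow> ('y \<Rightarrow> 'x::euclidean_space) \<Rightarrow> ('z \<Rightarrow> 'x) \<Rightarrow> 'x \<Rightarrow> 'y \<Rightarrow> 'z \<Rightarrow> bool" where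
  "primal_sol f1 D1 f2 D2 B1 B2 c y s \<longleftrightarrow> y \<in> D1 \<and> s \<in> D2 \<and> B1 y + B2 s = c \<and>
     (\<forall>y'\<in>D1. \<forall>s'\<in>D2. B1 y' + B2 s' = c \<longrightarrow> f1 y + f2 s \<le> f1 y' + f2 s')"

definition dual_obj ::
  "('y::euclidean_space \<Rightarrow> real) \<Rightarrow> 'y set \<Rightarrow> ('z::euclidean_space \<Rightarrow> real) \<Rightarrow> 'z set
   \<Rightarrow> ('y \<Rightarrow> 'x::euclidean_space) \<Rightarrow> ('z \<Rightarrow> 'x) \<Rightarrow> 'x \<Rightarrow> 'x \<Rightarrow> ereal" where
  "dual_obj f1 D1 f2 D2 B1 B2 c x =
     - conj f1 D1 (- adjoint B1 x) - conj f2 D2 (- adjoint B2 x) - ereal (inner c x)"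

definition dual_sol ::
  "('y::euclidean_space \<Rightarrow> real) \<Rightarrow> 'y set \<Rightarrow> ('z::euclidean_space \<Rightarrow> real) \<Rightarrow> 'z set
   \<Rightarrow> ('y \<Rightarrow> 'x::euclidean_space) \<Rightarrow> ('z \<Rightarrow> 'x) \<Rightarrow> 'x \<Rightarrow> 'x \<Rightarrow> bool" where
  "dual_sol f1 D1 f2 D2 B1 B2 c x \<longleftrightarrow>
     (\<forall>x'. dual_obj f1 D1 f2 D2 B1 B2 c x' \<le> dual_obj f1 D1 f2 D2 B1 B2 c x)"

end

theory Submission
  imports Defs
begin


lemma small_le0:
  fixes a K :: real
  assumes K: "K \<ge> 0" and h: "\<And>t. 0 < t \<Longrightarrow> t \<le> 1 \<Longrightarrow> a \<le> t * K"
  shows "a \<le> 0"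
proof (rule ccontr)
  assume "\<not> a \<le> 0" hence a: "a > 0" by simp
  define t where "t = min 1 (a / (2*K + 1))"
  have t0: "0 < t" using a K by (simp add: t_def)
  have t1: "t \<le> 1" by (simp add: t_def)
  have "t \<le> a / (2*K+1)" by (simp add: t_def)
  hence "t * K \<le> a / (2*K+1) * K" using mult_right_mono K by blast
  also have "\<dots> = a * K / (2*K+1)" by simp
  also have "\<dots> < a" using a K by (simp add: divide_less_eq algebra_simps) (simp add: add_pos_nonneg)
  finally show False using h[OF t0 t1] by simp
qed

lemma opt_subgrad:
  fixes f :: "'a::euclidean_space \<Rightarrow> real" and A :: "'a \<Rightarrow> 'b::euclidean_space"
  assumes cv: "convex_on D f" and A: "linear A" and sg: "\<sigma> \<ge> 0" and u: "u \<in> D"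
   and mn: "\<forall>v\<in>D. f u + inner p (A u) + \<sigma>/2 * (norm (A u + e))\<^sup>2 \<le> f v + inner p (A v) + \<sigma>/2*(norm (A v + e))\<^sup>2"
  shows "\<forall>v\<in>D. f v \<ge> f u - inner (p + \<sigma> *\<^sub>R (A u + e)) (A (v - u))"
proof
  fix v assume v: "v \<in> D"
  define d where "d = A (v - u)"
  define a where "a = f u - f v - inner (p + \<sigma> *\<^sub>R (A u + e)) d"
  have "a \<le> 0"
  proof (rule small_le0[of "\<sigma>/2 * (norm d)\<^sup>2"])
    show "0 \<le> \<sigma>/2 * (norm d)\<^sup>2" using sg by simp
    fix t :: real assume t0: "0 < t" and t1: "t \<le> 1"
    define ut where "ut = (1 - t) *\<^sub>R u + t *\<^sub>R v"
    have cD: "convex D" using cv convex_on_def by blast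
    have utD: "ut \<in> D" unfolding ut_def using cD u v t0 t1 by (simp add: convexD)
    have fut: "f ut \<le> (1-t) * f u + t * f v" unfolding ut_def using convex_onD[OF cv] t0 t1 u v by simp
    have Aut: "A ut = A u + t *\<^sub>R d"
      unfolding ut_def d_def using A by (simp add: linear_add linear_scale linear_diff algebra_simps)
    have m: "f u + inner p (A u) + \<sigma>/2 * (norm (A u + e))\<^sup>2 \<le> f ut + inner p (A ut) + \<sigma>/2*(norm (A ut + e))\<^sup>2"
      using mn utD by blast
    have nq: "(norm (A ut + e))\<^sup>2 = (norm (A u + e))\<^sup>2 + 2*t*inner (A u + e) d + t\<^sup>2 * (norm d)\<^sup>2"
      unfolding Aut power2_norm_eq_inner
      by (simp add: inner_add_left inner_add_right inner_commute power2_eq_square algebra_simps)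
    have m2: "f u \<le> f ut + t * inner p d + \<sigma>/2*(2*t*inner (A u + e) d + t\<^sup>2 * (norm d)\<^sup>2)"
      using m unfolding nq by (simp add: Aut inner_add_right algebra_simps)
    have ia: "inner (p + \<sigma> *\<^sub>R (A u + e)) d = inner p d + \<sigma> * inner (A u + e) d"
      by (simp add: inner_add_left)
    have "t * a \<le> t * (t * (\<sigma>/2 * (norm d)\<^sup>2))"
      using m2 fut unfolding a_def ia by (simp add: algebra_simps power2_eq_square)
    thus "a \<le> t * (\<sigma>/2 * (norm d)\<^sup>2)" using t0 by simp
  qed
  thus "f v \<ge> f u - inner (p + \<sigma> *\<^sub>R (A u + e)) (A (v - u))" unfolding a_def d_def by simp
qed



lemma min_subgrad:
  fixes f :: "'a::euclidean_space \<Rightarrow> real"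
  assumes cv: "convex_on D f" and u: "u \<in> D"
    and mn: "\<forall>v\<in>D. f u + 1/2*(norm (u-z))\<^sup>2 \<le> f v + 1/2*(norm(v-z))\<^sup>2"
  shows "\<forall>v\<in>D. f v \<ge> f u + inner (z - u) (v - u)"
proof -
  have "\<forall>v\<in>D. f v \<ge> f u - inner (0 + 1 *\<^sub>R ((\<lambda>x. x) u + (-z))) ((\<lambda>x. x) (v - u))"
    by (rule opt_subgrad[OF cv _ _ u]) (use mn in \<open>auto simp: linear_id[unfolded id_def]\<close>)
  then show ?thesis by (simp add: inner_diff_left inner_diff_right algebra_simps)
qed

lemma sub_mono:
  fixes f :: "'a::euclidean_space \<Rightarrow> real"
  assumes "u \<in> D" "v \<in> D" "\<forall>w\<in>D. f w \<ge> f u + inner p (w - u)"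
    "\<forall>w\<in>D. f w \<ge> f v + inner q (w - v)"
  shows "inner (p - q) (u - v) \<ge> 0"
proof -
  have "f v \<ge> f u + inner p (v - u)" "f u \<ge> f v + inner q (u - v)" using assms by auto
  then show ?thesis by (simp add: inner_diff_left inner_diff_right algebra_simps)
qed

lemma prox_char:
  fixes f :: "'a::euclidean_space \<Rightarrow> real"
  assumes cv: "convex_on D f" and u: "u \<in> D"
    and mn: "\<forall>v\<in>D. f u + 1/2*(norm (u-z))\<^sup>2 \<le> f v + 1/2*(norm(v-z))\<^sup>2"
  shows "prox f D z = u"
  unfolding prox_def
proof (rule the_equality)
  show "u \<in> D \<and> (\<forall>v\<in>D. f u + 1/2*(norm (u-z))\<^sup>2 \<le> f v + 1/2*(norm(v-z))\<^sup>2)" using u mn by blast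
  fix u' assume h: "u' \<in> D \<and> (\<forall>v\<in>D. f u' + 1/2*(norm (u'-z))\<^sup>2 \<le> f v + 1/2*(norm(v-z))\<^sup>2)"
  have s1: "\<forall>v\<in>D. f v \<ge> f u + inner (z - u) (v - u)" using min_subgrad[OF cv u mn] .
  have s2: "\<forall>v\<in>D. f v \<ge> f u' + inner (z - u') (v - u')" using min_subgrad[OF cv] h by blast
  have "inner ((z - u') - (z - u)) (u' - u) \<ge> 0" using sub_mono[OF _ u s2 s1] h by blast
  hence "inner (u - u') (u' - u) \<ge> 0" by simp
  hence "inner (u' - u) (u' - u) \<le> 0" by (metis inner_minus_left minus_diff_eq neg_0_le_iff_le)
  hence "inner (u' - u) (u' - u) = 0" using inner_ge_zero[of "u' - u"] by linarith
  thus "u' = u" by simp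
qed

lemma subgrad_prox:
  fixes f :: "'a::euclidean_space \<Rightarrow> real"
  assumes cv: "convex_on D f" and u: "u \<in> D"
    and sg: "\<forall>v\<in>D. f v \<ge> f u + inner \<phi> (v - u)"
  shows "prox f D (u + \<phi>) = u"
proof (rule prox_char[OF cv u], intro ballI)
  fix v assume v: "v \<in> D"
  have "f v \<ge> f u + inner \<phi> (v - u)" using sg v by blast
  moreover have "(norm (v - (u + \<phi>)))\<^sup>2 = (norm (v - u))\<^sup>2 - 2 * inner \<phi> (v - u) + (norm \<phi>)\<^sup>2"
    unfolding power2_norm_eq_inner by (simp add: inner_diff_left inner_diff_right inner_add_left inner_add_right inner_commute algebra_simps)
  moreover have "(norm (u - (u + \<phi>)))\<^sup>2 = (norm \<phi>)\<^sup>2" by simp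
  moreover have "(norm (v - u))\<^sup>2 \<ge> 0" by simp
  ultimately show "f u + 1/2*(norm (u-(u + \<phi>)))\<^sup>2 \<le> f v + 1/2*(norm(v-(u + \<phi>)))\<^sup>2" by linarith
qed


lemma prox_exists:
  fixes f :: "'a::euclidean_space \<Rightarrow> real"
  assumes pcc: "proper_closed_convex f D" and u0: "u0 \<in> D"
    and sg: "\<forall>v\<in>D. f v \<ge> f u0 + inner \<phi> (v - u0)"
  shows "\<exists>u\<in>D. \<forall>v\<in>D. f u + 1/2*(norm(u-z))\<^sup>2 \<le> f v + 1/2*(norm(v-z))\<^sup>2"
proof -
  define E where "E = {(y, t). y \<in> D \<and> f y \<le> t}"
  have cE: "closed E" using pcc unfolding proper_closed_convex_def E_def by blast
  define \<Phi> where "\<Phi> = (\<lambda>p::'a \<times> real. snd p + 1/2*(norm (fst p - z))\<^sup>2)"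
  define M where "M = \<Phi> (u0, f u0)"
  define K where "K = E \<inter> {p. \<Phi> p \<le> M}"
  have contPhi: "continuous_on UNIV \<Phi>" unfolding \<Phi>_def by (intro continuous_intros)
  have cK: "closed K" unfolding K_def
    by (intro closed_Int cE closed_Collect_le continuous_intros) (use contPhi in auto)
  define C where "C = M - f u0 + inner \<phi> (u0 - z) + 1/2 * (norm \<phi>)\<^sup>2"
  define r where "r = sqrt (2 * C)"
  define lo where "lo = f u0 - norm \<phi> * (r + norm (z - \<phi> - u0))"
  have sub: "K \<subseteq> cball (z - \<phi>) r \<times> {lo..M}"
  proof
    fix p assume pK: "p \<in> K"
    obtain u t where p: "p = (u, t)" by (cases p)
    have uD: "u \<in> D" and fu: "f u \<le> t" and tM: "t + 1/2*(norm (u - z))\<^sup>2 \<le> M"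
      using pK unfolding K_def E_def \<Phi>_def p by auto
    have fl: "f u \<ge> f u0 + inner \<phi> (u - u0)" using sg uD by blast
    have id: "(norm (u - (z - \<phi>)))\<^sup>2 = (norm (u - z))\<^sup>2 + 2 * inner \<phi> (u - z) + (norm \<phi>)\<^sup>2"
      unfolding power2_norm_eq_inner
      by (simp add: inner_diff_left inner_diff_right inner_add_left inner_add_right inner_commute algebra_simps)
    have ie: "inner \<phi> (u - z) = inner \<phi> (u - u0) + inner \<phi> (u0 - z)"
      by (simp add: inner_diff_right)
    have n2: "(norm (u - (z - \<phi>)))\<^sup>2 \<le> 2 * C"
      using id ie fl fu tM unfolding C_def by (simp add: algebra_simps)
    have nr: "norm (u - (z - \<phi>)) \<le> r" unfolding r_def using n2 by (simp add: real_le_rsqrt)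
    hence d1: "u \<in> cball (z - \<phi>) r" by (simp add: dist_norm norm_minus_commute)
    have "norm (u - u0) \<le> norm (u - (z - \<phi>)) + norm (z - \<phi> - u0)"
      using norm_triangle_ineq[of "u - (z - \<phi>)" "z - \<phi> - u0"] by simp
    hence "norm (u - u0) \<le> r + norm (z - \<phi> - u0)" using nr by linarith
    hence "norm \<phi> * norm (u - u0) \<le> norm \<phi> * (r + norm (z - \<phi> - u0))"
      by (simp add: mult_left_mono)
    moreover have "- inner \<phi> (u - u0) \<le> norm \<phi> * norm (u - u0)"
      using Cauchy_Schwarz_ineq2[of \<phi> "u - u0"] by (simp add: abs_le_iff)
    ultimately have "lo \<le> t" unfolding lo_def using fl fu by linarith
    moreover have "0 \<le> 1/2*(norm (u-z))\<^sup>2" by simp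
    hence "t \<le> M" using tM by linarith
    ultimately show "p \<in> cball (z - \<phi>) r \<times> {lo..M}" using d1 p by simp
  qed
  have bK: "bounded K"
    by (rule bounded_subset[OF _ sub]) (intro bounded_Times bounded_cball bounded_closed_interval)
  have kK: "compact K" using cK bK by (simp add: compact_eq_bounded_closed)
  have p0: "(u0, f u0) \<in> K" unfolding K_def E_def M_def using u0 by simp
  obtain ps where psK: "ps \<in> K" and psmin: "\<forall>q\<in>K. \<Phi> ps \<le> \<Phi> q"
    using continuous_attains_inf[OF kK _ continuous_on_subset[OF contPhi]] p0 by blast
  obtain us ts where ps: "ps = (us, ts)" by (cases ps)
  have usD: "us \<in> D" and fus: "f us \<le> ts" and psM: "\<Phi> ps \<le> M"
    using psK unfolding K_def E_def ps by auto
  show ?thesis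
  proof (intro bexI[OF _ usD] ballI)
    fix v assume v: "v \<in> D"
    have "\<Phi> ps \<le> \<Phi> (v, f v)"
    proof (cases "\<Phi> (v, f v) \<le> M")
      case True
      hence "(v, f v) \<in> K" unfolding K_def E_def using v by simp
      thus ?thesis using psmin by blast
    next
      case False thus ?thesis using psM by simp
    qed
    thus "f us + 1/2*(norm(us-z))\<^sup>2 \<le> f v + 1/2*(norm(v-z))\<^sup>2"
      using fus unfolding \<Phi>_def ps by simp
  qed
qed

lemma prox_bound:
  fixes f :: "'a::euclidean_space \<Rightarrow> real"
  assumes pcc: "proper_closed_convex f D" and s: "s \<in> D"
    and sg: "\<forall>v\<in>D. f v \<ge> f s + inner \<phi> (v - s)"
  shows "norm (s - prox f D (s + \<psi>)) \<le> norm (\<psi> - \<phi>)"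
proof -
  have cv: "convex_on D f" using pcc unfolding proper_closed_convex_def by blast
  obtain m where mD: "m \<in> D" and mn: "\<forall>v\<in>D. f m + 1/2*(norm(m-(s+\<psi>)))\<^sup>2 \<le> f v + 1/2*(norm(v-(s+\<psi>)))\<^sup>2"
    using prox_exists[OF pcc s sg] by blast
  have pm: "prox f D (s + \<psi>) = m" by (rule prox_char[OF cv mD mn])
  have sm: "\<forall>v\<in>D. f v \<ge> f m + inner ((s + \<psi>) - m) (v - m)" by (rule min_subgrad[OF cv mD mn])
  have "inner (((s + \<psi>) - m) - \<phi>) (m - s) \<ge> 0" by (rule sub_mono[OF mD s sm sg])
  moreover have "inner (((s + \<psi>) - m) - \<phi>) (m - s) = inner (\<psi> - \<phi>) (m - s) - (norm (m - s))\<^sup>2"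
    unfolding power2_norm_eq_inner
    by (simp add: inner_diff_left inner_diff_right inner_add_left inner_add_right inner_commute algebra_simps)
  moreover have "inner (\<psi> - \<phi>) (m - s) \<le> norm (\<psi> - \<phi>) * norm (m - s)"
    by (rule norm_cauchy_schwarz)
  ultimately have "(norm (m - s))\<^sup>2 \<le> norm (\<psi> - \<phi>) * norm (m - s)" by linarith
  hence "norm (m - s) \<le> norm (\<psi> - \<phi>)"
    by (cases "norm (m - s) = 0") (simp_all add: power2_eq_square)
  thus ?thesis using pm by (simp add: norm_minus_commute)
qed




lemma pr_nonexp:
  fixes X a b :: "'a::real_inner"
  assumes "inner X a \<le> 0" "inner (X + a + b) b \<le> 0"
  shows "norm (X + a + 2 *\<^sub>R b) \<le> norm (X - a)"
proof -
  have "(norm (X + a + 2 *\<^sub>R b))\<^sup>2 = (norm (X - a))\<^sup>2 + 4 * inner X a + 4 * inner (X + a + b) b"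
    unfolding power2_norm_eq_inner
    by (simp add: inner_add_left inner_add_right inner_diff_left inner_diff_right inner_commute algebra_simps)
  hence "(norm (X + a + 2 *\<^sub>R b))\<^sup>2 \<le> (norm (X - a))\<^sup>2" using assms by linarith
  thus ?thesis using power2_le_imp_le by fastforce
qed

lemma coco_of_nonexp:
  fixes w w' t t' :: "'a::real_inner"
  assumes "norm (t' - t) \<le> norm (w' - w)"
  shows "inner ((w' - t') - (w - t)) (w' - w) \<ge> 1/2 * (norm ((w' - t') - (w - t)))\<^sup>2"
proof -
  define dw where "dw = w' - w"
  define dg where "dg = (w' - t') - (w - t)"
  have e: "t' - t = dw - dg" unfolding dw_def dg_def by (simp add: algebra_simps)
  have "(norm (dw - dg))\<^sup>2 \<le> (norm dw)\<^sup>2" using assms unfolding e dw_def[symmetric]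
    by (simp add: power_mono)
  moreover have "(norm (dw - dg))\<^sup>2 = (norm dw)\<^sup>2 - 2 * inner dg dw + (norm dg)\<^sup>2"
    unfolding power2_norm_eq_inner by (simp add: inner_diff_left inner_diff_right inner_commute)
  ultimately show ?thesis unfolding dw_def[symmetric] dg_def[symmetric] by linarith
qed

lemma halpern_step:
  fixes w0 wk wk1 g g1 :: "'a::real_inner" and n :: real
  assumes n: "n \<ge> 0"
    and upd: "wk1 = (1/(n+2)) *\<^sub>R w0 + ((n+1)/(n+2)) *\<^sub>R (wk - g)"
    and coco: "inner (g1 - g) (wk1 - wk) \<ge> 1/2 * (norm (g1 - g))\<^sup>2"
  shows "(n+1)*(n+2)/2 * (norm g1)\<^sup>2 + (n+2) * inner g1 (wk1 - w0)
         \<le> n*(n+1)/2 * (norm g)\<^sup>2 + (n+1) * inner g (wk - w0)"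
proof -
  define d where "d = wk - w0"
  have np: "n + 2 > 0" using n by simp
  have s1: "1/(n+2) + (n+1)/(n+2) = 1" using np by (simp add: field_simps)
  have s2: "(1/(n+2)) *\<^sub>R v + ((n+1)/(n+2)) *\<^sub>R v = v" for v :: 'a
    by (simp only: scaleR_left_distrib[symmetric] s1 scaleR_one)
  have e1: "wk1 - w0 = ((n+1)/(n+2)) *\<^sub>R (d - g)"
    unfolding upd d_def using s2 by (simp add: algebra_simps scaleR_diff_right)
  have e2: "wk1 - wk = (-(1/(n+2))) *\<^sub>R d - ((n+1)/(n+2)) *\<^sub>R g"
    unfolding upd d_def using s2[of wk] by (simp add: algebra_simps)
  define P where "P = inner g1 d"
  define Q where "Q = inner g d"
  define G0 where "G0 = inner g g"
  define G1 where "G1 = inner g1 g1"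
  define Mx where "Mx = inner g1 g"
  have e3: "(n+2) *\<^sub>R (wk1 - wk) = - d - (n+1) *\<^sub>R g"
    unfolding e2 using np by (simp add: scaleR_diff_right)
  have c1: "(n+2) * inner (g1 - g) (wk1 - wk) = -(P - Q) - (n+1)*(Mx - G0)"
  proof -
    have "(n+2) * inner (g1 - g) (wk1 - wk) = inner (g1 - g) ((n+2) *\<^sub>R (wk1 - wk))" by simp
    also have "\<dots> = -(P - Q) - (n+1)*(Mx - G0)"
      unfolding e3 P_def Q_def Mx_def G0_def by (simp add: inner_diff_left inner_diff_right algebra_simps)
    finally show ?thesis .
  qed
  have c2: "(norm (g1 - g))\<^sup>2 = G1 - 2*Mx + G0"
    unfolding power2_norm_eq_inner G1_def Mx_def G0_def
    by (simp add: inner_diff_left inner_diff_right inner_commute)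
  have "(n+2) * (1/2 * (norm (g1 - g))\<^sup>2) \<le> (n+2) * inner (g1 - g) (wk1 - wk)"
    using coco np by (simp add: mult_left_mono)
  hence cc2: "(n+2)/2*(G1 - 2*Mx + G0) \<le> -(P - Q) - (n+1)*(Mx - G0)"
    unfolding c1 c2 by simp
  have br: "(n+2)/2*G1 + P - Mx - n/2*G0 - Q \<le> 0"
    using cc2 by (simp add: field_simps)
  have "(n+1) * ((n+2)/2*G1 + P - Mx - n/2*G0 - Q) \<le> 0"
    using br n by (simp add: mult_nonneg_nonpos)
  moreover have "(n+2) * inner g1 (wk1 - w0) = (n+1) * (P - Mx)"
    unfolding e1 P_def Mx_def using np by (simp add: inner_diff_right)
  moreover have "(norm g1)\<^sup>2 = G1" "(norm g)\<^sup>2 = G0" "inner g (wk - w0) = Q"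
    unfolding G1_def G0_def Q_def d_def by (simp_all add: power2_norm_eq_inner)
  ultimately show ?thesis by (simp add: algebra_simps)
qed


lemma halpern_rate:
  fixes w T :: "nat \<Rightarrow> 'a::real_inner" and ws :: 'a
  assumes upd: "\<And>k. w (Suc k) = (1/(real k+2)) *\<^sub>R w 0 + ((real k+1)/(real k+2)) *\<^sub>R T k"
    and ne: "\<And>k. norm (T (Suc k) - T k) \<le> norm (w (Suc k) - w k)"
    and nf: "\<And>k. norm (T k - ws) \<le> norm (w k - ws)"
  shows "norm (w k - T k) \<le> 2 * norm (w 0 - ws) / (real k + 1)"
proof -
  define g where "g k = w k - T k" for k
  define V where "V k = real k*(real k+1)/2 * (norm (g k))\<^sup>2 + (real k+1) * inner (g k) (w k - w 0)" for k
  have Vdec: "V (Suc k) \<le> V k" for k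
  proof -
    have coco: "inner (g (Suc k) - g k) (w (Suc k) - w k) \<ge> 1/2*(norm (g (Suc k) - g k))\<^sup>2"
      unfolding g_def by (rule coco_of_nonexp[OF ne])
    have u: "w (Suc k) = (1/(real k+2)) *\<^sub>R w 0 + ((real k+1)/(real k+2)) *\<^sub>R (w k - g k)"
      unfolding g_def using upd by simp
    have "(real k+1)*(real k+2)/2 * (norm (g (Suc k)))\<^sup>2 + (real k+2) * inner (g (Suc k)) (w (Suc k) - w 0)
       \<le> real k*(real k+1)/2 * (norm (g k))\<^sup>2 + (real k+1) * inner (g k) (w k - w 0)"
      by (rule halpern_step[OF _ u coco]) simp
    moreover have "real (Suc k) = real k + 1" by simp
    ultimately show ?thesis unfolding V_def by (simp add: algebra_simps)
  qed
  have V0: "V k \<le> 0"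
  proof (induction k)
    case 0 show ?case by (simp add: V_def)
  next
    case (Suc k) thus ?case using Vdec[of k] by linarith
  qed
  define G where "G = norm (g k)"
  define R0 where "R0 = norm (w 0 - ws)"
  define n where "n = real k"
  have c2: "inner (g k) (w k - ws) \<ge> 1/2*G\<^sup>2"
    using coco_of_nonexp[OF nf[of k]] unfolding g_def G_def by simp
  have c3: "inner (g k) (w 0 - ws) \<le> G * R0" unfolding G_def R0_def by (rule norm_cauchy_schwarz)
  have c4: "inner (g k) (w k - w 0) = inner (g k) (w k - ws) - inner (g k) (w 0 - ws)"
    by (simp add: inner_diff_right)
  have n0: "n \<ge> 0" unfolding n_def by simp
  have "(n+1) * inner (g k) (w k - w 0) \<ge> (n+1) * (1/2*G\<^sup>2 - G*R0)"
    using c2 c3 c4 n0 by (intro mult_left_mono) auto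
  hence "n*(n+1)/2*G\<^sup>2 + (n+1) * (1/2*G\<^sup>2 - G*R0) \<le> 0"
    using V0 unfolding V_def n_def[symmetric] G_def[symmetric] by linarith
  moreover have "n*(n+1)/2*G\<^sup>2 + (n+1) * (1/2*G\<^sup>2 - G*R0) = (n+1) * ((n+1)/2*G\<^sup>2 - G*R0)"
    by (simp add: field_simps)
  ultimately have "(n+1) * ((n+1)/2*G\<^sup>2 - G*R0) \<le> 0" by simp
  hence h: "(n+1)/2*G\<^sup>2 - G*R0 \<le> 0" using n0
    by (smt (verit) mult_pos_pos)
  have "G \<le> 2 * R0 / (n+1)"
  proof (cases "G = 0")
    case True thus ?thesis using n0 unfolding R0_def by simp
  next
    case False
    hence Gp: "G > 0" unfolding G_def by simp
    have "G * ((n+1)/2*G - R0) \<le> 0" using h by (simp add: algebra_simps power2_eq_square)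
    hence "(n+1)/2*G - R0 \<le> 0" using Gp by (simp add: mult_le_0_iff)
    thus ?thesis using n0 by (simp add: field_simps)
  qed
  thus ?thesis unfolding G_def R0_def n_def g_def .
qed




lemma lin_tendsto:
  fixes L :: "'a::euclidean_space \<Rightarrow> 'b::euclidean_space"
  assumes "linear L" "X \<longlonglongrightarrow> a"
  shows "(\<lambda>n. L (X n)) \<longlonglongrightarrow> L a"
  using assms linear_conv_bounded_linear bounded_linear.tendsto by blast

lemma step_subgrad:
  fixes f :: "'a::euclidean_space \<Rightarrow> real" and A :: "'a \<Rightarrow> 'b::euclidean_space"
  assumes cv: "convex_on D f" and A: "linear A" and sg: "\<sigma> \<ge> 0" and u: "u \<in> D"
   and mn: "\<forall>v\<in>D. f u + K + inner p (A u + e) + \<sigma>/2 * (norm (A u + e))\<^sup>2 \<le> f v + K + inner p (A v + e) + \<sigma>/2*(norm (A v + e))\<^sup>2"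
  shows "\<forall>v\<in>D. f v \<ge> f u + inner (- adjoint A (p + \<sigma> *\<^sub>R (A u + e))) (v - u)"
proof -
  have "\<forall>v\<in>D. f u + inner p (A u) + \<sigma>/2 * (norm (A u + e))\<^sup>2 \<le> f v + inner p (A v) + \<sigma>/2*(norm (A v + e))\<^sup>2"
    using mn by (simp add: inner_add_right algebra_simps)
  from opt_subgrad[OF cv A sg u this]
  show ?thesis by (simp add: adjoint_clauses[OF A])
qed

lemma lim_subgrad:
  fixes f :: "'a::euclidean_space \<Rightarrow> real"
  assumes pcc: "proper_closed_convex f D" and uD: "\<And>k. u k \<in> D" and us: "us \<in> D"
    and lu: "u \<longlonglongrightarrow> us" and lp: "\<phi> \<longlonglongrightarrow> \<phi>s"
    and sg: "\<And>k. \<forall>v\<in>D. f v \<ge> f (u k) + inner (\<phi> k) (v - u k)"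
  shows "\<forall>v\<in>D. f v \<ge> f us + inner \<phi>s (v - us)"
proof
  fix v assume v: "v \<in> D"
  define E where "E = {(y, t). y \<in> D \<and> f y \<le> t}"
  have cE: "closed E" using pcc unfolding proper_closed_convex_def E_def by blast
  have inE: "(u k, f v - inner (\<phi> k) (v - u k)) \<in> E" for k
    using sg[of k] v uD[of k] unfolding E_def by force
  have "(\<lambda>k. (u k, f v - inner (\<phi> k) (v - u k))) \<longlonglongrightarrow> (us, f v - inner \<phi>s (v - us))"
    by (intro tendsto_intros lu lp)
  hence "(us, f v - inner \<phi>s (v - us)) \<in> E"
    using closed_sequentially[of E "\<lambda>k. (u k, f v - inner (\<phi> k) (v - u k))"] cE inE by blast
  thus "f v \<ge> f us + inner \<phi>s (v - us)" unfolding E_def by simp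
qed

lemma T_nonexp:
  fixes B1 :: "'y::euclidean_space \<Rightarrow> 'x::euclidean_space" and B2 :: "'z::euclidean_space \<Rightarrow> 'x"
    and f1 :: "'y \<Rightarrow> real" and f2 :: "'z \<Rightarrow> real"
  assumes B1: "linear B1" and B2: "linear B2" and sg: "\<sigma> \<ge> 0"
    and s1: "s1 \<in> D2" and s2: "s2 \<in> D2" and y1: "y1 \<in> D1" and y2: "y2 \<in> D1"
    and h1: "xh1 = w1 + \<sigma> *\<^sub>R B2 s1" and h2: "xh2 = w2 + \<sigma> *\<^sub>R B2 s2"
    and p1: "xp1 = xh1 + \<sigma> *\<^sub>R (B1 y1 + B2 s1 - c)" and p2: "xp2 = xh2 + \<sigma> *\<^sub>R (B1 y2 + B2 s2 - c)"
    and g21: "\<forall>v\<in>D2. f2 v \<ge> f2 s1 + inner (- adjoint B2 xh1) (v - s1)"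
    and g22: "\<forall>v\<in>D2. f2 v \<ge> f2 s2 + inner (- adjoint B2 xh2) (v - s2)"
    and g11: "\<forall>v\<in>D1. f1 v \<ge> f1 y1 + inner (- adjoint B1 xp1) (v - y1)"
    and g12: "\<forall>v\<in>D1. f1 v \<ge> f1 y2 + inner (- adjoint B1 xp2) (v - y2)"
  shows "norm ((xp1 + \<sigma> *\<^sub>R (B1 y1 - c)) - (xp2 + \<sigma> *\<^sub>R (B1 y2 - c))) \<le> norm (w1 - w2)"
proof -
  have m2: "inner ((- adjoint B2 xh1) - (- adjoint B2 xh2)) (s1 - s2) \<ge> 0"
    by (rule sub_mono[OF s1 s2 g21 g22])
  have m1: "inner ((- adjoint B1 xp1) - (- adjoint B1 xp2)) (y1 - y2) \<ge> 0"
    by (rule sub_mono[OF y1 y2 g11 g12])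
  have e2: "inner ((- adjoint B2 xh1) - (- adjoint B2 xh2)) (s1 - s2) = - inner (xh1 - xh2) (B2 s1 - B2 s2)"
    by (simp add: inner_diff_left inner_diff_right adjoint_clauses[OF B2] linear_diff[OF B2])
  have e1: "inner ((- adjoint B1 xp1) - (- adjoint B1 xp2)) (y1 - y2) = - inner (xp1 - xp2) (B1 y1 - B1 y2)"
    by (simp add: inner_diff_left inner_diff_right adjoint_clauses[OF B1] linear_diff[OF B1])
  define X where "X = xh1 - xh2"
  define a where "a = \<sigma> *\<^sub>R (B2 s1 - B2 s2)"
  define b where "b = \<sigma> *\<^sub>R (B1 y1 - B1 y2)"
  have ia: "inner X a \<le> 0" unfolding X_def a_def using m2 e2 sg
    by (simp add: mult_nonneg_nonpos)
  have dxp: "xp1 - xp2 = X + a + b" unfolding X_def a_def b_def p1 p2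
    by (simp add: algebra_simps)
  have "inner (xp1 - xp2) b \<le> 0" unfolding b_def using m1 e1 sg
    by (simp add: mult_nonneg_nonpos)
  hence ib: "inner (X + a + b) b \<le> 0" unfolding dxp .
  have "norm (X + a + 2 *\<^sub>R b) \<le> norm (X - a)" by (rule pr_nonexp[OF ia ib])
  moreover have "(xp1 + \<sigma> *\<^sub>R (B1 y1 - c)) - (xp2 + \<sigma> *\<^sub>R (B1 y2 - c)) = X + a + 2 *\<^sub>R b"
  proof -
    have "(xp1 + \<sigma> *\<^sub>R (B1 y1 - c)) - (xp2 + \<sigma> *\<^sub>R (B1 y2 - c)) = (xp1 - xp2) + b"
      unfolding b_def by (simp add: algebra_simps)
    also have "\<dots> = X + a + b + b" using dxp by simp
    also have "\<dots> = X + a + 2 *\<^sub>R b" by (simp add: scaleR_2)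
    finally show ?thesis .
  qed
  moreover have "w1 - w2 = X - a" unfolding X_def a_def h1 h2 by (simp add: algebra_simps)
  ultimately show ?thesis by simp
qed




lemma halpern_bdd:
  fixes w T :: "nat \<Rightarrow> 'a::real_normed_vector" and ws :: 'a
  assumes upd: "\<And>k. w (Suc k) = (1/(real k+2)) *\<^sub>R w 0 + ((real k+1)/(real k+2)) *\<^sub>R T k"
    and nf: "\<And>k. norm (T k - ws) \<le> norm (w k - ws)"
  shows "norm (w k - ws) \<le> norm (w 0 - ws)"
proof (induction k)
  case 0 show ?case by simp
next
  case (Suc k)
  define \<alpha> where "\<alpha> = 1/(real k+2)"
  define \<beta> where "\<beta> = (real k+1)/(real k+2)"
  have ab: "\<alpha> + \<beta> = 1" unfolding \<alpha>_def \<beta>_def by (simp add: field_simps)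
  have a0: "\<alpha> \<ge> 0" and b0: "\<beta> \<ge> 0" unfolding \<alpha>_def \<beta>_def by simp_all
  have "w (Suc k) - ws = \<alpha> *\<^sub>R (w 0 - ws) + \<beta> *\<^sub>R (T k - ws)"
  proof -
    have "ws = \<alpha> *\<^sub>R ws + \<beta> *\<^sub>R ws" using ab by (metis scaleR_left_distrib scaleR_one)
    thus ?thesis unfolding upd \<alpha>_def[symmetric] \<beta>_def[symmetric] by (simp add: algebra_simps)
  qed
  hence "norm (w (Suc k) - ws) \<le> \<alpha> * norm (w 0 - ws) + \<beta> * norm (T k - ws)"
    using a0 b0 by (metis (no_types, lifting) abs_of_nonneg norm_scaleR norm_triangle_ineq)
  also have "\<dots> \<le> \<alpha> * norm (w 0 - ws) + \<beta> * norm (w 0 - ws)"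
    using nf[of k] Suc b0 by (simp add: mult_left_mono)
  also have "\<dots> = norm (w 0 - ws)" using ab by (metis distrib_right mult_1)
  finally show ?case .
qed

lemma h_ident:
  fixes W a1 a2 b1 b2 xs c :: "'a::real_inner"
  assumes c: "c = b1 + b2"
  shows "inner (W + \<sigma> *\<^sub>R a2 + \<sigma> *\<^sub>R (a1 + a2 - c)) (b1 - a1) + inner (W + \<sigma> *\<^sub>R a2) (b2 - a2)
     = - inner (a1 + a2 - c) (W - (xs + \<sigma> *\<^sub>R (b1 - c))) - inner (a1 + a2 - c) xs
       - \<sigma> * inner (a1 + a2 - c) (a1 + a2 - c)"
  unfolding c
  by (simp add: inner_add_left inner_add_right inner_diff_left inner_diff_right inner_commute algebra_simps)

lemma upd_ident:
  fixes X0 X P0 P1 :: "'a::real_vector" and n \<sigma> :: real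
  assumes n: "n \<ge> 0"
  shows "(1 / (n + 2)) *\<^sub>R X0 + ((n + 1) / (n + 2)) *\<^sub>R X + (\<sigma> / (n + 2)) *\<^sub>R (P0 - P1) + \<sigma> *\<^sub>R P1
    = (1/(n+2)) *\<^sub>R (X0 + \<sigma> *\<^sub>R P0) + ((n+1)/(n+2)) *\<^sub>R (X + \<sigma> *\<^sub>R P1)"
proof -
  have k: "\<sigma> - \<sigma> / (n + 2) = (n+1)/(n+2) * \<sigma>" using n by (simp add: field_simps)
  have L: "(1 / (n + 2)) *\<^sub>R X0 + ((n + 1) / (n + 2)) *\<^sub>R X + (\<sigma> / (n + 2)) *\<^sub>R (P0 - P1) + \<sigma> *\<^sub>R P1
     = (1 / (n + 2)) *\<^sub>R X0 + ((n + 1) / (n + 2)) *\<^sub>R X + (\<sigma> / (n + 2)) *\<^sub>R P0 + (\<sigma> - \<sigma> / (n + 2)) *\<^sub>R P1"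
    by (simp add: scaleR_right_diff_distrib scaleR_left_diff_distrib)
  have R: "(1/(n+2)) *\<^sub>R (X0 + \<sigma> *\<^sub>R P0) + ((n+1)/(n+2)) *\<^sub>R (X + \<sigma> *\<^sub>R P1)
     = (1 / (n + 2)) *\<^sub>R X0 + ((n + 1) / (n + 2)) *\<^sub>R X + (\<sigma> / (n + 2)) *\<^sub>R P0 + ((n+1)/(n+2) * \<sigma>) *\<^sub>R P1"
    by (simp add: scaleR_add_right)
  show ?thesis unfolding L R k ..
qed




theorem theorem3p6:
  fixes f1 :: "'y::euclidean_space \<Rightarrow> real" and D1 :: "'y set"
    and f2 :: "'z::euclidean_space \<Rightarrow> real" and D2 :: "'z set"
    and B1 :: "'y \<Rightarrow> 'x::euclidean_space" and B2 :: "'z \<Rightarrow> 'x" and c :: 'x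
    and S1 :: "'y \<Rightarrow> 'y" and S2 :: "'z \<Rightarrow> 'z"
    and \<sigma> :: real
    and y :: "nat \<Rightarrow> 'y" and s :: "nat \<Rightarrow> 'z"
    and x :: "nat \<Rightarrow> 'x" and xh :: "nat \<Rightarrow> 'x" and xhalf :: "nat \<Rightarrow> 'x"
    and ys :: 'y and ss :: 'z and xs :: 'x
  assumes f1: "proper_closed_convex f1 D1" and f2: "proper_closed_convex f2 D2"
    and B1: "linear B1" and B2: "linear B2"
    and S1: "strong_cvx_op f1 D1 S1" and S2: "strong_cvx_op f2 D2 S2"
    \<comment> \<open>Assumption 1\<close>
    and A1a: "rel_interior (conj_dom f1 D1) \<inter> range (adjoint B1) \<noteq> {}"
    and A1b: "rel_interior (conj_dom f2 D2) \<inter> range (adjoint B2) \<noteq> {}"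
    and A1c: "rel_interior {u. - adjoint B1 u \<in> conj_dom f1 D1}
              \<inter> rel_interior {u. - adjoint B2 u \<in> conj_dom f2 D2} \<noteq> {}"
    and A1d: "\<exists>yp sp. primal_sol f1 D1 f2 D2 B1 B2 c yp sp"
    \<comment> \<open>Assumption 2\<close>
    and A2a: "pos_def_op (\<lambda>v. S1 v + adjoint B1 (B1 v))"
    and A2b: "pos_def_op (\<lambda>v. S2 v + adjoint B2 (B2 v))"
    \<comment> \<open>Algorithm B\<close>
    and sig: "\<sigma> > 0" and y0: "y 0 \<in> D1" and xh0: "xh 0 = x 0"
    and s_step: "\<And>k. s (Suc k) \<in> D2 \<and>
        (\<forall>s'\<in>D2. aug_lag f1 f2 B1 B2 c \<sigma> (y k) (s (Suc k)) (xh k)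
                   \<le> aug_lag f1 f2 B1 B2 c \<sigma> (y k) s' (xh k))"
    and xhalf_step: "\<And>k. xhalf k = xh k + \<sigma> *\<^sub>R (B1 (y k) + B2 (s (Suc k)) - c)"
    and y_step: "\<And>k. y (Suc k) \<in> D1 \<and>
        (\<forall>y'\<in>D1. aug_lag f1 f2 B1 B2 c \<sigma> (y (Suc k)) (s (Suc k)) (xhalf k)
                   \<le> aug_lag f1 f2 B1 B2 c \<sigma> y' (s (Suc k)) (xhalf k))"
    and x_step: "\<And>k. x (Suc k) = xhalf k + \<sigma> *\<^sub>R (B1 (y (Suc k)) + B2 (s (Suc k)) - c)"
    and xh_step: "\<And>k. xh (Suc k) = (1 / (real k + 2)) *\<^sub>R xh 0
        + ((real k + 1) / (real k + 2)) *\<^sub>R x (Suc k)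
        + (\<sigma> / (real k + 2)) *\<^sub>R ((B1 (y 0) - c) - (B1 (y (Suc k)) - c))"
    \<comment> \<open>the limit of the iterates, which solves (P) and (D)\<close>
    and lim_y: "y \<longlonglongrightarrow> ys" and lim_s: "s \<longlonglongrightarrow> ss" and lim_x: "x \<longlonglongrightarrow> xs"
    and sol_P: "primal_sol f1 D1 f2 D2 B1 B2 c ys ss"
    and sol_D: "dual_sol f1 D1 f2 D2 B1 B2 c xs"
  shows "\<forall>k. kkt_res_norm f1 D1 f2 D2 B1 B2 c (y (Suc k)) (s (Suc k)) (x (Suc k))
              \<le> 1 / (real k + 1) * ((\<sigma> * onorm (adjoint B2) + 1) / \<sigma>
                   * (norm (x 0 - xs) + \<sigma> * norm (B1 (y 0) - B1 ys)))
           \<and> f1 (y (Suc k)) + f2 (s (Suc k)) - f1 ys - f2 ss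
              \<ge> - (1 / (real k + 1) * (norm xs / \<sigma>
                   * (norm (x 0 - xs) + \<sigma> * norm (B1 (y 0) - B1 ys))))
           \<and> f1 (y (Suc k)) + f2 (s (Suc k)) - f1 ys - f2 ss
              \<le> 1 / (real k + 1) * (((norm (x 0 - xs) + \<sigma> * norm (B1 (y 0) - B1 ys))\<^sup>2
                   + norm xs * (norm (x 0 - xs) + \<sigma> * norm (B1 (y 0) - B1 ys))) / \<sigma>)"
proof -
  have cv1: "convex_on D1 f1" using f1 unfolding proper_closed_convex_def by blast
  have cv2: "convex_on D2 f2" using f2 unfolding proper_closed_convex_def by blast
  have ysD: "ys \<in> D1" and ssD: "ss \<in> D2" and feas: "B1 ys + B2 ss = c"
    using sol_P unfolding primal_sol_def by auto
  have sig0: "\<sigma> \<ge> 0" using sig by simp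
  have yD: "y (Suc k) \<in> D1" for k using y_step[of k] by blast
  have sD: "s (Suc k) \<in> D2" for k using s_step[of k] by blast
  define r where "r k = B1 (y (Suc k)) + B2 (s (Suc k)) - c" for k
  have xr: "x (Suc k) = xhalf k + \<sigma> *\<^sub>R r k" for k unfolding r_def by (rule x_step)
  have sg2: "\<forall>v\<in>D2. f2 v \<ge> f2 (s (Suc k)) + inner (- adjoint B2 (xhalf k)) (v - s (Suc k))" for k
  proof -
    have al: "aug_lag f1 f2 B1 B2 c \<sigma> (y k) s' (xh k) = f2 s' + f1 (y k) + inner (xh k) (B2 s' + (B1 (y k) - c))
        + \<sigma>/2 * (norm (B2 s' + (B1 (y k) - c)))\<^sup>2" for s'
      by (simp add: aug_lag_def algebra_simps)
    have mn: "\<forall>v\<in>D2. f2 (s (Suc k)) + f1 (y k) + inner (xh k) (B2 (s (Suc k)) + (B1 (y k) - c))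
        + \<sigma>/2 * (norm (B2 (s (Suc k)) + (B1 (y k) - c)))\<^sup>2
        \<le> f2 v + f1 (y k) + inner (xh k) (B2 v + (B1 (y k) - c)) + \<sigma>/2 * (norm (B2 v + (B1 (y k) - c)))\<^sup>2"
      using s_step[of k] unfolding al by blast
    have e: "xh k + \<sigma> *\<^sub>R (B2 (s (Suc k)) + (B1 (y k) - c)) = xhalf k"
      using xhalf_step[of k] by (simp add: algebra_simps)
    show ?thesis using step_subgrad[OF cv2 B2 sig0 sD mn] unfolding e .
  qed
  have sg1: "\<forall>v\<in>D1. f1 v \<ge> f1 (y (Suc k)) + inner (- adjoint B1 (x (Suc k))) (v - y (Suc k))" for k
  proof -
    have al: "aug_lag f1 f2 B1 B2 c \<sigma> y' (s (Suc k)) (xhalf k) = f1 y' + f2 (s (Suc k))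
        + inner (xhalf k) (B1 y' + (B2 (s (Suc k)) - c))
        + \<sigma>/2 * (norm (B1 y' + (B2 (s (Suc k)) - c)))\<^sup>2" for y'
      by (simp add: aug_lag_def algebra_simps)
    have mn: "\<forall>v\<in>D1. f1 (y (Suc k)) + f2 (s (Suc k)) + inner (xhalf k) (B1 (y (Suc k)) + (B2 (s (Suc k)) - c))
        + \<sigma>/2 * (norm (B1 (y (Suc k)) + (B2 (s (Suc k)) - c)))\<^sup>2
        \<le> f1 v + f2 (s (Suc k)) + inner (xhalf k) (B1 v + (B2 (s (Suc k)) - c))
          + \<sigma>/2 * (norm (B1 v + (B2 (s (Suc k)) - c)))\<^sup>2"
      using y_step[of k] unfolding al by blast
    have e: "xhalf k + \<sigma> *\<^sub>R (B1 (y (Suc k)) + (B2 (s (Suc k)) - c)) = x (Suc k)"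
      using x_step[of k] by (simp add: algebra_simps)
    show ?thesis using step_subgrad[OF cv1 B1 sig0 yD mn] unfolding e .
  qed
  have aB1: "linear (adjoint B1)" by (rule adjoint_linear[OF B1])
  have aB2: "linear (adjoint B2)" by (rule adjoint_linear[OF B2])
  have ly: "(\<lambda>k. y (Suc k)) \<longlonglongrightarrow> ys" using lim_y by (rule LIMSEQ_Suc)
  have ls: "(\<lambda>k. s (Suc k)) \<longlonglongrightarrow> ss" using lim_s by (rule LIMSEQ_Suc)
  have lx: "(\<lambda>k. x (Suc k)) \<longlonglongrightarrow> xs" using lim_x by (rule LIMSEQ_Suc)
  have lr: "r \<longlonglongrightarrow> 0"
  proof -
    have "(\<lambda>k. B1 (y (Suc k)) + B2 (s (Suc k)) - c) \<longlonglongrightarrow> B1 ys + B2 ss - c"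
      by (intro tendsto_intros lin_tendsto[OF B1 ly] lin_tendsto[OF B2 ls])
    thus ?thesis using feas unfolding r_def by simp
  qed
  have lxh: "xhalf \<longlonglongrightarrow> xs"
  proof -
    have "(\<lambda>k. x (Suc k) - \<sigma> *\<^sub>R r k) \<longlonglongrightarrow> xs - \<sigma> *\<^sub>R 0"
      by (intro tendsto_intros lx lr)
    moreover have "xhalf = (\<lambda>k. x (Suc k) - \<sigma> *\<^sub>R r k)" using xr by (intro ext) simp
    ultimately show ?thesis by simp
  qed
  have kkt1: "\<forall>v\<in>D1. f1 v \<ge> f1 ys + inner (- adjoint B1 xs) (v - ys)"
    by (rule lim_subgrad[OF f1 yD ysD ly _ sg1]) (intro tendsto_intros lin_tendsto[OF aB1 lx])
  have kkt2: "\<forall>v\<in>D2. f2 v \<ge> f2 ss + inner (- adjoint B2 xs) (v - ss)"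
    by (rule lim_subgrad[OF f2 sD ssD ls _ sg2]) (intro tendsto_intros lin_tendsto[OF aB2 lxh])
  define w where "w k = xh k + \<sigma> *\<^sub>R (B1 (y k) - c)" for k
  define T where "T k = x (Suc k) + \<sigma> *\<^sub>R (B1 (y (Suc k)) - c)" for k
  define wst where "wst = xs + \<sigma> *\<^sub>R (B1 ys - c)"
  have hxw: "xhalf k = w k + \<sigma> *\<^sub>R B2 (s (Suc k))" for k
    unfolding w_def xhalf_step by (simp add: algebra_simps)
  have upd: "w (Suc k) = (1/(real k+2)) *\<^sub>R w 0 + ((real k+1)/(real k+2)) *\<^sub>R T k" for k
    unfolding w_def T_def xh_step xh0[symmetric] by (rule upd_ident) simp
  have ne: "norm (T (Suc k) - T k) \<le> norm (w (Suc k) - w k)" for k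
    unfolding T_def
    by (rule T_nonexp[OF B1 B2 sig0 sD sD yD yD hxw hxw x_step x_step sg2 sg2 sg1 sg1])
  have hst: "xs = wst + \<sigma> *\<^sub>R B2 ss" unfolding wst_def feas[symmetric] by (simp add: algebra_simps)
  have pst: "xs = xs + \<sigma> *\<^sub>R (B1 ys + B2 ss - c)" using feas by simp
  have nf: "norm (T k - wst) \<le> norm (w k - wst)" for k
  proof -
    have "norm ((x (Suc k) + \<sigma> *\<^sub>R (B1 (y (Suc k)) - c)) - (xs + \<sigma> *\<^sub>R (B1 ys - c))) \<le> norm (w k - wst)"
      by (rule T_nonexp[OF B1 B2 sig0 sD ssD yD ysD hxw hst x_step pst sg2 kkt2 sg1 kkt1])
    thus ?thesis unfolding T_def wst_def .
  qed
  define R where "R = norm (x 0 - xs) + \<sigma> * norm (B1 (y 0) - B1 ys)"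
  have wR: "norm (w 0 - wst) \<le> R"
  proof -
    have "w 0 - wst = (x 0 - xs) + \<sigma> *\<^sub>R (B1 (y 0) - B1 ys)"
      unfolding w_def wst_def xh0 by (simp add: algebra_simps)
    hence "norm (w 0 - wst) \<le> norm (x 0 - xs) + norm (\<sigma> *\<^sub>R (B1 (y 0) - B1 ys))"
      by (metis norm_triangle_ineq)
    thus ?thesis unfolding R_def using sig0 by simp
  qed
  have wT: "w k - T k = (- (2*\<sigma>)) *\<^sub>R r k" for k
  proof -
    have l2: "(\<sigma> * 2) *\<^sub>R v = \<sigma> *\<^sub>R v + \<sigma> *\<^sub>R v" for v :: 'x
      by (metis mult.commute scaleR_2 scaleR_scaleR)
    show ?thesis unfolding T_def xr hxw r_def by (simp add: algebra_simps l2)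
  qed
  have rb: "norm (r k) \<le> R / (\<sigma> * (real k + 1))" for k
  proof -
    have "norm (w k - T k) \<le> 2 * norm (w 0 - wst) / (real k + 1)"
      by (rule halpern_rate[OF upd ne nf])
    also have "\<dots> \<le> 2 * R / (real k + 1)" using wR by (simp add: divide_right_mono)
    finally have "2 * \<sigma> * norm (r k) \<le> 2 * R / (real k + 1)" using sig0 unfolding wT by simp
    hence h1: "\<sigma> * norm (r k) \<le> R / (real k + 1)" by simp
    have kp: "real k + 1 > 0" by simp
    have h2: "\<sigma> * norm (r k) * (real k + 1) \<le> R" using h1 pos_le_divide_eq[OF kp] by blast
    have sp: "\<sigma> * (real k + 1) > 0" using sig by simp
    show ?thesis using h2 pos_le_divide_eq[OF sp] by (simp add: mult_ac)
  qed
  have wb: "norm (w k - wst) \<le> R" for k using halpern_bdd[OF upd nf, of k] wR by linarith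
  have R0: "R \<ge> 0" unfolding R_def using sig0 by simp
  show ?thesis
  proof (intro allI conjI)
    fix k
    define \<rho> where "\<rho> = norm (r k)"
    have \<rho>0: "\<rho> \<ge> 0" unfolding \<rho>_def by simp
    have \<rho>b: "\<rho> \<le> R / (\<sigma> * (real k + 1))" unfolding \<rho>_def by (rule rb)
    define on where "on = onorm (adjoint B2)"
    have on0: "on \<ge> 0" unfolding on_def using aB2 linear_conv_bounded_linear onorm_pos_le by blast
    have p1: "prox f1 D1 (y (Suc k) - adjoint B1 (x (Suc k))) = y (Suc k)"
      using subgrad_prox[OF cv1 yD sg1[of k]] by simp
    have p2: "norm (s (Suc k) - prox f2 D2 (s (Suc k) - adjoint B2 (x (Suc k))))
        \<le> norm ((- adjoint B2 (x (Suc k))) - (- adjoint B2 (xhalf k)))"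
      using prox_bound[OF f2 sD sg2[of k], of "- adjoint B2 (x (Suc k))"] by simp
    have "(- adjoint B2 (x (Suc k))) - (- adjoint B2 (xhalf k)) = - adjoint B2 (\<sigma> *\<^sub>R r k)"
      unfolding xr by (simp add: linear_add[OF aB2])
    hence "norm ((- adjoint B2 (x (Suc k))) - (- adjoint B2 (xhalf k))) \<le> on * (\<sigma> * \<rho>)"
      unfolding on_def \<rho>_def
      using onorm[of "adjoint B2" "\<sigma> *\<^sub>R r k"] aB2 linear_conv_bounded_linear sig0 by auto
    hence e2: "norm (s (Suc k) - prox f2 D2 (s (Suc k) - adjoint B2 (x (Suc k)))) \<le> on * \<sigma> * \<rho>"
      using p2 by simp
    have e3: "norm (c - B1 (y (Suc k)) - B2 (s (Suc k))) = \<rho>"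
      unfolding \<rho>_def r_def by (metis diff_diff_eq minus_diff_eq norm_minus_cancel)
    define E2 where "E2 = norm (s (Suc k) - prox f2 D2 (s (Suc k) - adjoint B2 (x (Suc k))))"
    have E20: "E2 \<ge> 0" unfolding E2_def by simp
    have "kkt_res_norm f1 D1 f2 D2 B1 B2 c (y (Suc k)) (s (Suc k)) (x (Suc k)) = sqrt (E2\<^sup>2 + \<rho>\<^sup>2)"
      unfolding kkt_res_norm_def p1 e3 E2_def by simp
    also have "\<dots> \<le> sqrt ((E2 + \<rho>)\<^sup>2)"
      using E20 \<rho>0 by (intro real_sqrt_le_mono) (simp add: power2_eq_square algebra_simps)
    also have "\<dots> = E2 + \<rho>" using E20 \<rho>0 by simp
    also have "\<dots> \<le> (\<sigma> * on + 1) * \<rho>" using e2 unfolding E2_def by (simp add: algebra_simps)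
    also have "\<dots> \<le> (\<sigma> * on + 1) * (R / (\<sigma> * (real k + 1)))"
      using \<rho>b on0 sig0 by (intro mult_left_mono) auto
    also have "\<dots> = 1 / (real k + 1) * ((\<sigma> * on + 1) / \<sigma> * R)"
      using sig by (simp add: field_simps)
    finally show "kkt_res_norm f1 D1 f2 D2 B1 B2 c (y (Suc k)) (s (Suc k)) (x (Suc k))
              \<le> 1 / (real k + 1) * ((\<sigma> * onorm (adjoint B2) + 1) / \<sigma>
                   * (norm (x 0 - xs) + \<sigma> * norm (B1 (y 0) - B1 ys)))"
      unfolding on_def R_def .
  next
    fix k
    define \<rho> where "\<rho> = norm (r k)"
    have \<rho>b: "\<rho> \<le> R / (\<sigma> * (real k + 1))" unfolding \<rho>_def by (rule rb)
    have a1: "f1 (y (Suc k)) \<ge> f1 ys - inner xs (B1 (y (Suc k)) - B1 ys)"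
      using kkt1 yD[of k] by (simp add: adjoint_clauses[OF B1] linear_diff[OF B1])
    have a2: "f2 (s (Suc k)) \<ge> f2 ss - inner xs (B2 (s (Suc k)) - B2 ss)"
      using kkt2 sD[of k] by (simp add: adjoint_clauses[OF B2] linear_diff[OF B2])
    have ir: "inner xs (B1 (y (Suc k)) - B1 ys) + inner xs (B2 (s (Suc k)) - B2 ss) = inner xs (r k)"
      unfolding r_def feas[symmetric] by (simp add: inner_diff_right inner_add_right)
    have "inner xs (r k) \<le> norm xs * \<rho>" unfolding \<rho>_def by (rule norm_cauchy_schwarz)
    also have "\<dots> \<le> norm xs * (R / (\<sigma> * (real k + 1)))" using \<rho>b norm_ge_zero mult_left_mono by blast
    also have "\<dots> = 1 / (real k + 1) * (norm xs / \<sigma> * R)" by (simp add: field_simps)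
    finally show "f1 (y (Suc k)) + f2 (s (Suc k)) - f1 ys - f2 ss
              \<ge> - (1 / (real k + 1) * (norm xs / \<sigma>
                   * (norm (x 0 - xs) + \<sigma> * norm (B1 (y 0) - B1 ys))))"
      using a1 a2 ir unfolding R_def by linarith
  next
    fix k
    define \<rho> where "\<rho> = norm (r k)"
    have \<rho>0: "\<rho> \<ge> 0" unfolding \<rho>_def by simp
    have \<rho>b: "\<rho> \<le> R / (\<sigma> * (real k + 1))" unfolding \<rho>_def by (rule rb)
    have b1: "f1 ys \<ge> f1 (y (Suc k)) - inner (x (Suc k)) (B1 ys - B1 (y (Suc k)))"
      using sg1[of k] ysD by (simp add: adjoint_clauses[OF B1] linear_diff[OF B1])
    have b2: "f2 ss \<ge> f2 (s (Suc k)) - inner (xhalf k) (B2 ss - B2 (s (Suc k)))"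
      using sg2[of k] ssD by (simp add: adjoint_clauses[OF B2] linear_diff[OF B2])
    have id: "inner (x (Suc k)) (B1 ys - B1 (y (Suc k))) + inner (xhalf k) (B2 ss - B2 (s (Suc k)))
       = - inner (r k) (w k - wst) - inner (r k) xs - \<sigma> * inner (r k) (r k)"
      unfolding xr hxw r_def wst_def by (rule h_ident[OF feas[symmetric]])
    have "- inner (r k) (w k - wst) \<le> \<rho> * R"
    proof -
      have "- inner (r k) (w k - wst) \<le> \<rho> * norm (w k - wst)"
        unfolding \<rho>_def using norm_cauchy_schwarz[of "- r k" "w k - wst"] by simp
      also have "\<dots> \<le> \<rho> * R" using wb[of k] \<rho>0 by (simp add: mult_left_mono)
      finally show ?thesis .
    qed
    moreover have "- inner (r k) xs \<le> \<rho> * norm xs"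
      unfolding \<rho>_def using norm_cauchy_schwarz[of "- r k" xs] by simp
    moreover have "\<sigma> * inner (r k) (r k) \<ge> 0" using sig0 by simp
    ultimately have "f1 (y (Suc k)) + f2 (s (Suc k)) - f1 ys - f2 ss \<le> \<rho> * (R + norm xs)"
      using b1 b2 id by (simp add: algebra_simps)
    also have "\<dots> \<le> R / (\<sigma> * (real k + 1)) * (R + norm xs)"
      using \<rho>b R0 by (intro mult_right_mono) auto
    also have "\<dots> = 1 / (real k + 1) * ((R\<^sup>2 + norm xs * R) / \<sigma>)"
      by (simp add: field_simps power2_eq_square)
    finally show "f1 (y (Suc k)) + f2 (s (Suc k)) - f1 ys - f2 ss
              \<le> 1 / (real k + 1) * (((norm (x 0 - xs) + \<sigma> * norm (B1 (y 0) - B1 ys))\<^sup>2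
                   + norm xs * (norm (x 0 - xs) + \<sigma> * norm (B1 (y 0) - B1 ys))) / \<sigma>)"
      unfolding R_def .
  qed
qed


end
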